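(* Assume (A.a) and (A.b). Let $\beta\in[0,1)$, $\lambda\in[0,\frac{\beta}{1-\beta}]$, and step sizes $\{\alpha_k\}_k\subset(0,\infty)$ with \[ \alpha_k\le\frac{(1-\beta)(1-\beta^m)}{4Lm}\ \ \forall k,\qquad\sum_{k=1}^\infty\alpha_k=\infty,\qquad\sum_{k=1}^\infty\alpha_k^3<\infty, \] and let the sequences be generated by RRM with an arbitrary (deterministic or random) sequence of permutations; the conclusions hold for every realization. Then: (a) $\sum_{k=1}^\infty\alpha_k\|\nabla f(x^k)\|^2<\infty$ and $\big(\sum_{k=1}^T\alpha_k\big)\cdot\min_{k=1,\dots,T}\|\nabla f(x^k)\|^2\to0$ as $T\to\infty$; (b) $\lim_{k\to\infty}\|\nabla f(x^k)\|=0$ and $\lim_{k\to\infty}\|\nabla f(z^k)\|=0$; in particular every accumulation point of $\{x^k\}_k$ or of $\{z^k\}_k$ is a stationary point of $f$; (c) there is $f^*\in\mathbb R$ such that $f(x^k)\to f^*$ and $f(z^k)\to f^*$.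
   Context: Let $n,d\in\mathbb N$, $f_1,\dots,f_n:\mathbb R^d\to\mathbb R$ continuously differentiable, $f:=\frac1n\sum_{i=1}^n f_i$, $[n]:=\{1,\dots,n\}$. Fix a mini-batch size $b\in\mathbb N$ with $m:=n/b\in\mathbb N$. Random reshuffling with momentum (RRM) with step sizes $\{\alpha_k\}_{k\ge1}\subset(0,\infty)$ and parameters $\beta,\lambda$ generates sequences as follows: start with $x^1=\tilde x^1\in\mathbb R^d$; for each $k=1,2,\dots$ choose a permutation $\pi^k=(\pi^k_1,\dots,\pi^k_n)$ of $[n]$, set $y_0^k=\tilde x^k$, $y_1^k=x^k$, and for $i=1,\dots,m$ compute $\hat y_i^k=y_i^k+\lambda(y_i^k-y_{i-1}^k)$, $d_i^k=\frac1b\sum_{j=(i-1)b+1}^{ib}\nabla f_{\pi^k_j}(\hat y_i^k)$, $y_{i+1}^k=y_i^k-\alpha_kd_i^k+\beta(y_i^k-y_{i-1}^k)$; then set $\tilde x^{k+1}=y_m^k$, $x^{k+1}=y_{m+1}^k$. The proxy iterates are $z^k:=\frac{1}{1-\beta}x^k-\frac{\beta}{1-\beta}\tilde x^k$. Assumption (A.a): there are $L>0$ and $\bar f\in\mathbb R$ such that each $\nabla f_i$ is $L$-Lipschitz and $f_i(x)\ge\bar f$ for all $x\in\mathbb R^d$, $i\in[n]$. Assumption (A.b): $\{\alpha_k\}_k$ is non-increasing. *)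

theory Defs
  imports "HOL-Analysis.Analysis"
begin

text \<open>The state is the pair (y_(i-1), y_i);
  the step with index i produces (y_i, y_(i+1)).  g j is the gradient of f_j,
  p is the permutation of epoch k (p j = prm^k_j for j in 1..n), a = alpha_k.\<close>
definition rrm_step ::
  "(nat \<Rightarrow> 'a::real_inner \<Rightarrow> 'a) \<Rightarrow> nat \<Rightarrow> (nat \<Rightarrow> nat) \<Rightarrow> real \<Rightarrow> real \<Rightarrow> real
    \<Rightarrow> nat \<Rightarrow> 'a \<times> 'a \<Rightarrow> 'a \<times> 'a" where
  "rrm_step g b p a beta lam i st =
     (let yp = fst st; y = snd st;
          yhat = y + lam *\<^sub>R (y - yp);
          d = (1 / real b) *\<^sub>R (\<Sum>j = (i - 1) * b + 1 .. i * b. g (p j) yhat)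
      in (y, y - a *\<^sub>R d + beta *\<^sub>R (y - yp)))"

text \<open>rrm_inner ... i st0 = (y_i, y_(i+1)) when st0 = (y_0, y_1).\<close>
primrec rrm_inner ::
  "(nat \<Rightarrow> 'a::real_inner \<Rightarrow> 'a) \<Rightarrow> nat \<Rightarrow> (nat \<Rightarrow> nat) \<Rightarrow> real \<Rightarrow> real \<Rightarrow> real
    \<Rightarrow> 'a \<times> 'a \<Rightarrow> nat \<Rightarrow> 'a \<times> 'a" where
  "rrm_inner g b p a beta lam st0 0 = st0"
| "rrm_inner g b p a beta lam st0 (Suc i) =
     rrm_step g b p a beta lam (Suc i) (rrm_inner g b p a beta lam st0 i)"

text \<open>rrm_state ... k = (tilde x^k, x^k) for k \<ge> 1 (index 0 is a dummy equal to the start).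
  n = number of components, b = batch size, m = n div b, prm k = permutation of epoch k,
  alpha k = step size of epoch k.\<close>
primrec rrm_state ::
  "(nat \<Rightarrow> 'a::real_inner \<Rightarrow> 'a) \<Rightarrow> nat \<Rightarrow> nat \<Rightarrow> (nat \<Rightarrow> nat \<Rightarrow> nat) \<Rightarrow> (nat \<Rightarrow> real)
    \<Rightarrow> real \<Rightarrow> real \<Rightarrow> 'a \<Rightarrow> nat \<Rightarrow> 'a \<times> 'a" where
  "rrm_state g n b prm alpha beta lam x1 0 = (x1, x1)"
| "rrm_state g n b prm alpha beta lam x1 (Suc k) =
     (if k = 0 then (x1, x1)
      else rrm_inner g b (prm k) (alpha k) beta lam
             (rrm_state g n b prm alpha beta lam x1 k) (n div b))"

definition rrm_x where
  "rrm_x g n b prm alpha beta lam x1 k = snd (rrm_state g n b prm alpha beta lam x1 k)"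

definition rrm_xt where
  "rrm_xt g n b prm alpha beta lam x1 k = fst (rrm_state g n b prm alpha beta lam x1 k)"

definition rrm_z where
  "rrm_z g n b prm alpha beta lam x1 k =
     (1 / (1 - beta)) *\<^sub>R rrm_x g n b prm alpha beta lam x1 k
     - (beta / (1 - beta)) *\<^sub>R rrm_xt g n b prm alpha beta lam x1 k"

end

theory Submission
  imports Defs
begin

lemma descent_lemma:
  fixes F :: "'a::real_inner \<Rightarrow> real" and G :: "'a \<Rightarrow> 'a"
  assumes der: "\<And>y. (F has_derivative (\<lambda>h. h \<bullet> G y)) (at y)"
    and lip: "\<And>u v. norm (G u - G v) \<le> L * norm (u - v)" and L0: "L \<ge> 0"
  shows "F y \<le> F x + G x \<bullet> (y - x) + L * (norm (y - x))\<^sup>2"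
proof -
  define \<phi> where "\<phi> t = F (x + t *\<^sub>R (y - x))" for t :: real
  have d: "(\<phi> has_derivative (\<lambda>s. (s *\<^sub>R (y - x)) \<bullet> G (x + t *\<^sub>R (y - x)))) (at t within {0..1})" for t
  proof -
    have "((\<lambda>t. x + t *\<^sub>R (y - x)) has_derivative (\<lambda>s. s *\<^sub>R (y - x))) (at t within {0..1})"
      by (auto intro!: derivative_eq_intros)
    from has_derivative_compose[OF this der] show ?thesis unfolding \<phi>_def by simp
  qed
  obtain t where t: "t \<in> {0..1}" and eq: "\<phi> 1 - \<phi> 0 = ((1 - 0) *\<^sub>R (y - x)) \<bullet> G (x + t *\<^sub>R (y - x))"
    using mvt_very_simple[of 0 1 \<phi>, OF _ d] by auto
  have "(y - x) \<bullet> (G (x + t *\<^sub>R (y - x)) - G x) \<le> norm (y - x) * norm (G (x + t *\<^sub>R (y - x)) - G x)"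
    by (rule norm_cauchy_schwarz)
  also have "\<dots> \<le> norm (y - x) * (L * norm (t *\<^sub>R (y - x)))"
    using lip[of "x + t *\<^sub>R (y - x)" x] by (intro mult_left_mono) auto
  also have "\<dots> = t * L * (norm (y - x))\<^sup>2" using t by (simp add: power2_eq_square)
  also have "\<dots> \<le> L * (norm (y - x))\<^sup>2"
    using t L0 by (intro mult_right_mono) (auto simp: mult_le_cancel_right1 mult_left_le_one_le)
  finally have "(y - x) \<bullet> G (x + t *\<^sub>R (y - x)) \<le> G x \<bullet> (y - x) + L * (norm (y - x))\<^sup>2"
    by (simp add: inner_diff_right inner_commute)
  with eq show ?thesis unfolding \<phi>_def by simp
qed


lemma grad_sq_bound:
  fixes F :: "'a::real_inner \<Rightarrow> real" and G :: "'a \<Rightarrow> 'a"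
  assumes der: "\<And>y. (F has_derivative (\<lambda>h. h \<bullet> G y)) (at y)"
    and lip: "\<And>u v. norm (G u - G v) \<le> L * norm (u - v)" and L0: "L > 0"
    and low: "\<And>y. F y \<ge> fb"
  shows "(norm (G y))\<^sup>2 \<le> 4 * L * (F y - fb)"
proof -
  define y' where "y' = y - (1 / (2 * L)) *\<^sub>R G y"
  have "F y' \<le> F y + G y \<bullet> (y' - y) + L * (norm (y' - y))\<^sup>2"
    by (rule descent_lemma[OF der lip]) (use L0 in auto)
  also have "G y \<bullet> (y' - y) = - (1 / (2 * L)) * (norm (G y))\<^sup>2"
    by (simp add: y'_def power2_norm_eq_inner)
  also have "norm (y' - y) = (1 / (2 * L)) * norm (G y)"
    using L0 by (simp add: y'_def)
  also have "L * ((1 / (2 * L)) * norm (G y))\<^sup>2 = (norm (G y))\<^sup>2 / (4 * L)"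
    using L0 by (simp add: power_mult_distrib power2_eq_square)
  finally have "F y' \<le> F y - (1 / (2 * L)) * (norm (G y))\<^sup>2 + (norm (G y))\<^sup>2 / (4 * L)"
    by simp
  moreover have "(1 / (2 * L)) * (norm (G y))\<^sup>2 = 2 * ((norm (G y))\<^sup>2 / (4 * L))"
    using L0 by simp
  ultimately have "F y' \<le> F y - (norm (G y))\<^sup>2 / (4 * L)" by linarith
  with low[of y'] have "(norm (G y))\<^sup>2 / (4 * L) \<le> F y - fb" by linarith
  thus ?thesis using L0 by (simp add: divide_le_eq mult.commute)
qed

lemma robbins_siegmund:
  fixes P a b :: "nat \<Rightarrow> real"
  assumes P0: "\<And>k. P k \<ge> 0" and a0: "\<And>k. a k \<ge> 0" and b0: "\<And>k. b k \<ge> 0"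
    and sa: "summable a" and rec: "\<And>k. P (Suc k) \<le> (1 + a k) * P k - b k"
  shows "summable b" "convergent P" "\<And>k. P k \<le> P 0 * exp (suminf a)"
proof -
  have bnd: "P k \<le> P 0 * exp (\<Sum>j<k. a j)" for k
  proof (induction k)
    case 0 then show ?case by simp
  next
    case (Suc k)
    have "P (Suc k) \<le> (1 + a k) * P k" using rec[of k] b0[of k] by linarith
    also have "\<dots> \<le> exp (a k) * P k" using P0[of k] by (intro mult_right_mono) auto
    also have "\<dots> \<le> exp (a k) * (P 0 * exp (\<Sum>j<k. a j))" using Suc by (intro mult_left_mono) auto
    also have "\<dots> = P 0 * exp (\<Sum>j<Suc k. a j)" by (simp add: exp_add)
    finally show ?case .
  qed
  define M where "M = P 0 * exp (suminf a)"
  have PM: "P k \<le> M" for k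
  proof -
    have "(\<Sum>j<k. a j) \<le> suminf a" using sa a0 by (intro sum_le_suminf) auto
    hence "P 0 * exp (\<Sum>j<k. a j) \<le> M" unfolding M_def using P0[of 0] by (intro mult_left_mono) auto
    with bnd[of k] show ?thesis by linarith
  qed
  thus "\<And>k. P k \<le> P 0 * exp (suminf a)" unfolding M_def .
  have M0: "M \<ge> 0" using PM[of 0] P0[of 0] by linarith
  have bk: "b k \<le> P k - P (Suc k) + M * a k" for k
  proof -
    have "a k * P k \<le> a k * M" using PM a0 by (intro mult_left_mono) auto
    thus ?thesis using rec[of k] by (simp add: algebra_simps)
  qed
  have sumb: "(\<Sum>j<k. b j) \<le> P 0 - P k + M * (\<Sum>j<k. a j)" for k
  proof (induction k)
    case 0 then show ?case by simp
  next
    case (Suc k) then show ?case using bk[of k] by (simp add: algebra_simps)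
  qed
  have sa_le: "(\<Sum>j<k. a j) \<le> suminf a" for k using sa a0 by (intro sum_le_suminf) auto
  show sb: "summable b"
  proof (rule summableI_nonneg_bounded[where x = "P 0 + M * suminf a"])
    fix k
    have "M * (\<Sum>j<k. a j) \<le> M * suminf a" using M0 sa_le by (intro mult_left_mono) auto
    thus "(\<Sum>j<k. b j) \<le> P 0 + M * suminf a" using sumb[of k] P0[of k] by linarith
  qed (use b0 in auto)
  have saP: "summable (\<lambda>j. a j * P j)"
    by (rule summable_comparison_test'[where g = "\<lambda>j. M * a j"])
      (use sa a0 P0 PM in \<open>auto intro: summable_mult mult_right_mono simp: mult.commute\<close>)
  define Q where "Q k = P k - (\<Sum>j<k. a j * P j - b j)" for k
  have "decseq Q" unfolding decseq_Suc_iff Q_def using rec by (simp add: algebra_simps)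
  moreover have "\<forall>i. - suminf (\<lambda>j. a j * P j) \<le> Q i"
  proof
    fix i
    have "(\<Sum>j<i. a j * P j - b j) \<le> (\<Sum>j<i. a j * P j)" using b0 by (intro sum_mono) auto
    also have "\<dots> \<le> suminf (\<lambda>j. a j * P j)" using saP a0 P0 by (intro sum_le_suminf) auto
    finally show "- suminf (\<lambda>j. a j * P j) \<le> Q i" unfolding Q_def using P0[of i] by linarith
  qed
  ultimately obtain q where q: "Q \<longlonglongrightarrow> q" by (rule decseq_convergent)
  have "(\<lambda>k. \<Sum>j<k. a j * P j - b j) \<longlonglongrightarrow> (\<Sum>j. a j * P j - b j)"
    using summable_diff[OF saP sb] by (simp add: summable_LIMSEQ)
  from tendsto_add[OF q this] have "(\<lambda>k. P k) \<longlonglongrightarrow> q + (\<Sum>j. a j * P j - b j)"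
    by (simp add: Q_def)
  thus "convergent P" by (auto simp: convergent_def)
qed

lemma linear_rec_zero:
  fixes s t :: "nat \<Rightarrow> real"
  assumes s0: "\<And>k. s k \<ge> 0" and rec: "\<And>k. s (Suc k) \<le> q * s k + t k"
    and q: "0 \<le> q" "q < 1" and t: "t \<longlonglongrightarrow> 0"
  shows "s \<longlonglongrightarrow> 0"
proof (rule LIMSEQ_I)
  fix r :: real assume r: "r > 0"
  have "r * (1 - q) / 2 > 0" using r q by auto
  from LIMSEQ_D[OF t this] obtain N where N: "\<And>k. k \<ge> N \<Longrightarrow> norm (t k) < r * (1 - q) / 2" by auto
  have ind: "s (N + j) \<le> q ^ j * s N + r / 2" for j
  proof (induction j)
    case 0 then show ?case using r by simp
  next
    case (Suc j)
    have "s (N + Suc j) \<le> q * s (N + j) + t (N + j)" using rec[of "N + j"] by simp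
    also have "\<dots> \<le> q * (q ^ j * s N + r / 2) + r * (1 - q) / 2"
      using Suc q N[of "N + j"] by (intro add_mono mult_left_mono) auto
    also have "\<dots> = q ^ Suc j * s N + (q * (r / 2) + r * (1 - q) / 2)" by (simp add: algebra_simps)
    also have "q * (r / 2) + r * (1 - q) / 2 = r / 2" by (simp add: algebra_simps diff_divide_distrib)
    finally show ?case .
  qed
  have "(\<lambda>j. q ^ j * s N) \<longlonglongrightarrow> 0 * s N" using q by (intro tendsto_intros) auto
  from LIMSEQ_D[OF this, of "r / 2"] r obtain J where J: "\<And>j. j \<ge> J \<Longrightarrow> norm (q ^ j * s N) < r / 2" by auto
  show "\<exists>no. \<forall>k\<ge>no. norm (s k - 0) < r"
  proof (intro exI allI impI)
    fix k assume "k \<ge> N + J"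
    define j where "j = k - N"
    have kj: "k = N + j" "j \<ge> J" using \<open>k \<ge> N + J\<close> by (auto simp: j_def)
    have "s k \<le> q ^ j * s N + r / 2" using ind kj by simp
    moreover have "q ^ j * s N < r / 2" using J[of j] kj by simp
    ultimately show "norm (s k - 0) < r" using s0[of k] by simp
  qed
qed


lemma min_times_sum_zero:
  fixes \<alpha> c :: "nat \<Rightarrow> real"
  assumes \<alpha>0: "\<And>k. k \<ge> 1 \<Longrightarrow> \<alpha> k \<ge> 0" and c0: "\<And>k. c k \<ge> 0"
    and div: "filterlim (\<lambda>T. \<Sum>k = 1..T. \<alpha> k) at_top sequentially"
    and sm: "summable (\<lambda>k. \<alpha> (Suc k) * c (Suc k))"
  shows "(\<lambda>T. (\<Sum>k = 1..T. \<alpha> k) * Min (c ` {1..T})) \<longlonglongrightarrow> 0"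
proof (rule LIMSEQ_I)
  fix r :: real assume r: "r > 0"
  define S where "S T = (\<Sum>k = 1..T. \<alpha> k)" for T
  obtain N where N: "\<And>m n. m \<ge> N \<Longrightarrow> norm (\<Sum>j=m..n. \<alpha> (Suc j) * c (Suc j)) < r / 2"
    using summable_partial_sum_bound[OF sm, of "r / 2"] r by auto
  have "eventually (\<lambda>T. 2 * S N \<le> S T) sequentially"
    using div unfolding filterlim_at_top S_def by auto
  then obtain T0 where T0: "\<And>T. T \<ge> T0 \<Longrightarrow> 2 * S N \<le> S T" by (auto simp: eventually_sequentially)
  show "\<exists>no. \<forall>T\<ge>no. norm (S T * Min (c ` {1..T}) - 0) < r"
  proof (intro exI allI impI)
    fix T assume T: "T \<ge> T0 + N + 1"
    define p where "p = T - N"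
    have Tp: "T = N + p" "p \<ge> 1" using T by (auto simp: p_def)
    have fin: "finite (c ` {1..T})" "c ` {1..T} \<noteq> {}" using T by auto
    define \<mu> where "\<mu> = Min (c ` {1..T})"
    have mu0: "\<mu> \<ge> 0" unfolding \<mu>_def using fin c0 by (auto simp: Min_ge_iff)
    have mule: "\<mu> \<le> c k" if "k \<in> {1..T}" for k unfolding \<mu>_def using fin that by auto
    have split: "S T = S N + (\<Sum>k = N + 1..N + p. \<alpha> k)"
      unfolding S_def Tp(1) by (rule sum.ub_add_nat) simp
    have "(\<Sum>k = N + 1..N + p. \<alpha> k) * \<mu> \<le> (\<Sum>k = N + 1..N + p. \<alpha> k * c k)"
      unfolding sum_distrib_right using \<alpha>0 mule Tp by (intro sum_mono mult_left_mono) auto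
    also have "\<dots> = (\<Sum>j = N..N + p - 1. \<alpha> (Suc j) * c (Suc j))"
    proof -
      have "N + p = Suc (N + p - 1)" using Tp by simp
      hence "{N + 1..N + p} = {Suc N..Suc (N + p - 1)}" by simp
      thus ?thesis by (simp only: sum.shift_bounds_cl_Suc_ivl)
    qed
    also have "\<dots> < r / 2" using N[of N "N + p - 1"] by simp
    finally have a: "(S T - S N) * \<mu> < r / 2" using split by simp
    have SN0: "S N \<ge> 0" unfolding S_def using \<alpha>0 by (intro sum_nonneg) auto
    have "S T \<ge> 2 * S N" using T0 T by simp
    hence "S T * \<mu> \<le> 2 * ((S T - S N) * \<mu>)" using mu0 SN0
      by (simp add: algebra_simps mult_left_mono)
    hence "S T * \<mu> < r" using a by linarith
    moreover have "S T * \<mu> \<ge> 0" using SN0 \<open>S T \<ge> 2 * S N\<close> mu0 by simp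
    ultimately show "norm (S T * Min (c ` {1..T}) - 0) < r" unfolding \<mu>_def by simp
  qed
qed

lemma slow_var_zero:
  fixes \<alpha> h :: "nat \<Rightarrow> real"
  assumes \<alpha>0: "\<And>k. \<alpha> k \<ge> 0" and h0: "\<And>k. h k \<ge> 0"
    and div: "filterlim (\<lambda>T. \<Sum>k<T. \<alpha> k) at_top sequentially"
    and sm: "summable (\<lambda>k. \<alpha> k * (h k)\<^sup>2)" and C: "C > 0"
    and var: "\<And>k. h (Suc k) \<ge> h k - C * \<alpha> k"
  shows "h \<longlonglongrightarrow> 0"
proof (rule LIMSEQ_I)
  fix r :: real assume r: "r > 0"
  define e where "e = r / 2"
  have e: "e > 0" using r by (simp add: e_def)
  obtain N where N: "\<And>m n. m \<ge> N \<Longrightarrow> norm (\<Sum>j=m..n. \<alpha> j * (h j)\<^sup>2) < e ^ 3 / C"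
    using summable_partial_sum_bound[OF sm, of "e ^ 3 / C"] e C by auto
  show "\<exists>no. \<forall>k\<ge>no. norm (h k - 0) < r"
  proof (intro exI allI impI)
    fix k assume kN: "k \<ge> N"
    show "norm (h k - 0) < r"
    proof (rule ccontr)
      assume "\<not> norm (h k - 0) < r"
      hence hk: "h k \<ge> 2 * e" using h0[of k] by (simp add: e_def)
      define s where "s j = (\<Sum>l\<in>{k..<k + j}. \<alpha> l)" for j
      have ind: "h (k + j) \<ge> h k - C * s j" for j
      proof (induction j)
        case 0 then show ?case by (simp add: s_def)
      next
        case (Suc j)
        have "s (Suc j) = s j + \<alpha> (k + j)" by (simp add: s_def)
        thus ?case using Suc var[of "k + j"] by (simp add: algebra_simps)
      qed
      have "\<exists>j. s j > e / C"
      proof -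
        have "eventually (\<lambda>T. (\<Sum>l<k. \<alpha> l) + e / C + 1 \<le> (\<Sum>l<T. \<alpha> l)) sequentially"
          using div unfolding filterlim_at_top by auto
        then obtain T where T: "T \<ge> k" "(\<Sum>l<k. \<alpha> l) + e / C + 1 \<le> (\<Sum>l<T. \<alpha> l)"
          by (auto simp: eventually_sequentially) (metis le_add2 le_add_same_cancel2 nat_le_linear)
        have "(\<Sum>l<T. \<alpha> l) = (\<Sum>l<k. \<alpha> l) + s (T - k)"
        proof -
          have "{..<T} = {..<k} \<union> {k..<k + (T - k)}" using T by auto
          thus ?thesis unfolding s_def by (simp add: sum.union_disjoint ivl_disj_int)
        qed
        thus ?thesis using T by (intro exI[of _ "T - k"]) linarith
      qed
      define j0 where "j0 = (LEAST j. s j > e / C)"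
      have j0: "s j0 > e / C" unfolding j0_def using \<open>\<exists>j. s j > e / C\<close> by (rule LeastI_ex)
      have j0min: "s i \<le> e / C" if "i < j0" for i
        using not_less_Least[OF that[unfolded j0_def]] by simp
      have j0pos: "j0 > 0" using j0 e C by (cases j0) (auto simp: s_def divide_less_0_iff)
      have hbig: "h l \<ge> e" if "l \<in> {k..<k + j0}" for l
      proof -
        have "l = k + (l - k)" "l - k < j0" using that by auto
        hence "h l \<ge> h k - C * s (l - k)" using ind[of "l - k"] by simp
        moreover have "C * s (l - k) \<le> C * (e / C)" using j0min[OF \<open>l - k < j0\<close>] C by (intro mult_left_mono) auto
        moreover have "C * (e / C) = e" using C by simp
        ultimately show ?thesis using hk by linarith
      qed
      have "e ^ 3 / C = e\<^sup>2 * (e / C)" by (simp add: power3_eq_cube power2_eq_square)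
      also have "\<dots> < e\<^sup>2 * s j0" using j0 e by (intro mult_strict_left_mono) auto
      also have "\<dots> = (\<Sum>l\<in>{k..<k + j0}. \<alpha> l * e\<^sup>2)" by (simp add: s_def sum_distrib_left mult.commute)
      also have "\<dots> \<le> (\<Sum>l\<in>{k..<k + j0}. \<alpha> l * (h l)\<^sup>2)"
        using hbig e \<alpha>0 by (intro sum_mono mult_left_mono power_mono) auto
      also have "\<dots> = (\<Sum>l\<in>{k..k + j0 - 1}. \<alpha> l * (h l)\<^sup>2)"
        using j0pos by (intro sum.cong) auto
      also have "\<dots> \<le> norm (\<Sum>l\<in>{k..k + j0 - 1}. \<alpha> l * (h l)\<^sup>2)"
        by simp
      also have "\<dots> < e ^ 3 / C" using N[OF kN] by simp
      finally have "e ^ 3 / C < e ^ 3 / C" .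
      thus False by simp
    qed
  qed
qed


lemma scalar_descent:
  fixes c L a e :: real
  assumes c: "c > 0" and Lc: "L * c \<le> 1 / 4" and L: "L \<ge> 0" and a: "a \<ge> 0" and e: "e \<ge> 0"
  shows "- c * a\<^sup>2 + a * e + L * (c * a + e)\<^sup>2 \<le> - (c / 4) * a\<^sup>2 + (2 / c) * e\<^sup>2"
proof -
  have 1: "a * e \<le> (c / 4) * a\<^sup>2 + e\<^sup>2 / c"
  proof -
    have "0 \<le> (c * a / 2 - e)\<^sup>2" by simp
    hence "c * a * e \<le> (c * a)\<^sup>2 / 4 + e\<^sup>2" by (simp add: power2_eq_square algebra_simps)
    hence "c * (a * e) \<le> c * ((c / 4) * a\<^sup>2 + e\<^sup>2 / c)" using c by (simp add: power2_eq_square algebra_simps)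
    thus ?thesis using c by simp
  qed
  have 2: "(c * a + e)\<^sup>2 \<le> 2 * (c * a)\<^sup>2 + 2 * e\<^sup>2"
  proof -
    have "0 \<le> (c * a - e)\<^sup>2" by simp
    thus ?thesis by (simp add: power2_eq_square algebra_simps)
  qed
  have "L * (c * a + e)\<^sup>2 \<le> L * (2 * (c * a)\<^sup>2 + 2 * e\<^sup>2)" using 2 L by (rule mult_left_mono)
  also have "\<dots> = 2 * (L * c) * c * a\<^sup>2 + 2 * L * e\<^sup>2" by (simp add: power2_eq_square algebra_simps)
  also have "\<dots> \<le> 2 * (1/4) * c * a\<^sup>2 + 2 * (1 / (4 * c)) * e\<^sup>2"
  proof (intro add_mono mult_right_mono mult_left_mono)
    show "L \<le> 1 / (4 * c)" using Lc c by (simp add: field_simps)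
  qed (use Lc c in auto)
  finally have 3: "L * (c * a + e)\<^sup>2 \<le> (c / 2) * a\<^sup>2 + e\<^sup>2 / (2 * c)" by simp
  have "e\<^sup>2 / c + e\<^sup>2 / (2 * c) \<le> (2 / c) * e\<^sup>2" using c by (simp add: field_simps)
  with 1 3 show ?thesis by (simp add: algebra_simps)
qed

lemma epoch_abstract:
  fixes W Z Yh Dv G :: "nat \<Rightarrow> 'a::real_inner" and gz :: 'a and f :: "'a \<Rightarrow> real"
    and \<alpha> \<beta> lam L \<eta> \<mu> \<theta> S A :: real and m :: nat
  assumes \<beta>: "0 \<le> \<beta>" "\<beta> < 1" and \<alpha>: "\<alpha> > 0" and L: "L > 0" and m: "m \<ge> 1"
    and lam: "0 \<le> lam" "lam \<le> \<mu>"
    and \<eta>_def: "\<eta> = \<alpha> / (1 - \<beta>)" and \<mu>_def: "\<mu> = \<beta> / (1 - \<beta>)"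
    and \<theta>_def: "\<theta> = 1 - \<beta> ^ m" and S_def: "S = (\<Sum>i<m. \<beta> ^ i)"
    and step: "\<eta> * L * m \<le> \<theta> / 4"
    and hW: "\<And>i. W (Suc i) = \<beta> *\<^sub>R W i - \<alpha> *\<^sub>R Dv i"
    and hZ: "\<And>i. Z (Suc i) = Z i - \<eta> *\<^sub>R Dv i"
    and hY: "\<And>i. Yh i - Z i = (lam - \<mu>) *\<^sub>R W i"
    and hD: "\<And>i. i < m \<Longrightarrow> norm (Dv i - G i) \<le> L * norm (Yh i - Z 0)"
    and hG: "(\<Sum>i<m. G i) = real m *\<^sub>R gz" and hA: "(\<Sum>i<m. norm (G i)) \<le> A"
    and hf: "f (Z m) \<le> f (Z 0) + gz \<bullet> (Z m - Z 0) + L * (norm (Z m - Z 0))\<^sup>2"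
  shows "norm (W m) \<le> (1 - \<theta> / 2) * norm (W 0) + 2 * \<alpha> * A"
    and "f (Z m) \<le> f (Z 0) - (\<eta> * m / 4) * (norm gz)\<^sup>2 + 64 * \<eta> ^ 3 * m * L\<^sup>2 * A\<^sup>2
                   + 16 * \<eta> * L\<^sup>2 * \<mu>\<^sup>2 * S\<^sup>2 * (norm (W 0))\<^sup>2 / m"
    and "norm (Z m - Z 0) \<le> \<eta> * (2 * A + 2 * L * \<mu> * S * norm (W 0))"
proof -
  define V where "V = norm (W 0)"
  define Pd where "Pd i = (\<Sum>l<i. norm (Dv l))" for i
  define D where "D = Pd m"
  have \<eta>0: "\<eta> > 0" using \<eta>_def \<alpha> \<beta> by simp
  have \<mu>0: "\<mu> \<ge> 0" using \<mu>_def \<beta> by simp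
  have \<alpha>\<mu>: "\<alpha> * \<mu> = \<beta> * \<eta>" using \<eta>_def \<mu>_def by simp
  have \<beta>\<eta>: "\<beta> * \<eta> \<le> \<eta>" using \<beta> \<eta>0 by (simp add: mult_le_cancel_right1)
  have \<theta>1: "\<theta> \<le> 1" using \<theta>_def \<beta> by simp
  have Sm: "S \<le> m"
  proof -
    have "S \<le> (\<Sum>i<m. 1)" unfolding S_def using \<beta> by (intro sum_mono power_le_one) auto
    thus ?thesis by simp
  qed
  have S0: "S \<ge> 0" unfolding S_def using \<beta> by (intro sum_nonneg) auto
  have V0: "V \<ge> 0" by (simp add: V_def)
  have Pd0: "Pd i \<ge> 0" for i by (simp add: Pd_def sum_nonneg)
  have PdD: "Pd i \<le> D" if "i \<le> m" for i
    unfolding D_def Pd_def using that by (intro sum_mono2) auto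
  have etaLm: "\<eta> * L * m \<le> 1 / 4" using step \<theta>1 by simp
  have Zsum: "Z i = Z 0 - \<eta> *\<^sub>R (\<Sum>l<i. Dv l)" for i
    by (induction i) (auto simp: hZ algebra_simps)
  have B1: "norm (Z i - Z 0) \<le> \<eta> * Pd i" for i
  proof -
    have "norm (Z i - Z 0) = \<eta> * norm (\<Sum>l<i. Dv l)" using Zsum[of i] \<eta>0 by simp
    also have "\<dots> \<le> \<eta> * Pd i" unfolding Pd_def using \<eta>0 by (intro mult_left_mono norm_sum) auto
    finally show ?thesis .
  qed
  have B2: "norm (W i) \<le> \<beta> ^ i * V + \<alpha> * Pd i" for i
  proof (induction i)
    case 0 then show ?case by (simp add: V_def Pd_def)
  next
    case (Suc i)
    have "norm (W (Suc i)) \<le> \<beta> * norm (W i) + \<alpha> * norm (Dv i)"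
      unfolding hW using \<beta> \<alpha> by (metis (no_types, lifting) abs_of_nonneg less_imp_le norm_scaleR norm_triangle_ineq4 order.trans)
    also have "\<dots> \<le> \<beta> * (\<beta> ^ i * V + \<alpha> * Pd i) + \<alpha> * norm (Dv i)"
      using Suc \<beta> \<alpha> by (intro add_mono mult_left_mono) auto
    also have "\<dots> \<le> \<beta> ^ Suc i * V + \<alpha> * Pd (Suc i)"
    proof -
      have "\<beta> * (\<alpha> * Pd i) \<le> \<alpha> * Pd i" using \<beta> \<alpha> Pd0[of i]
        by (simp add: mult_le_cancel_right1 mult.assoc[symmetric] mult_left_le_one_le)
      thus ?thesis by (simp add: Pd_def algebra_simps)
    qed
    finally show ?case .
  qed
  define U where "U = (\<Sum>i<m. norm (Yh i - Z 0))"
  have B4: "norm (Yh i - Z 0) \<le> 2 * \<eta> * D + \<mu> * (\<beta> ^ i * V)" if "i < m" for i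
  proof -
    have "norm (Yh i - Z 0) \<le> norm (Yh i - Z i) + norm (Z i - Z 0)"
      by (metis diff_add_cancel norm_triangle_ineq add_diff_eq)
    also have "norm (Yh i - Z i) = \<bar>lam - \<mu>\<bar> * norm (W i)" by (simp add: hY)
    also have "\<bar>lam - \<mu>\<bar> * norm (W i) \<le> \<mu> * (\<beta> ^ i * V + \<alpha> * D)"
    proof (rule mult_mono)
      show "\<bar>lam - \<mu>\<bar> \<le> \<mu>" using lam by simp
      have "\<alpha> * Pd i \<le> \<alpha> * D" using PdD[of i] that \<alpha> by (intro mult_left_mono) auto
      thus "norm (W i) \<le> \<beta> ^ i * V + \<alpha> * D" using B2[of i] by linarith
    qed (use \<mu>0 in auto)
    also have "norm (Z i - Z 0) \<le> \<eta> * D"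
    proof -
      have "\<eta> * Pd i \<le> \<eta> * D" using PdD[of i] that \<eta>0 by (intro mult_left_mono) auto
      thus ?thesis using B1[of i] by linarith
    qed
    finally have "norm (Yh i - Z 0) \<le> \<mu> * (\<beta> ^ i * V) + (\<alpha> * \<mu>) * D + \<eta> * D"
      by (simp add: algebra_simps)
    moreover have "(\<alpha> * \<mu>) * D \<le> \<eta> * D" unfolding \<alpha>\<mu> using \<beta>\<eta> PdD[of 0] Pd0[of 0]
      by (intro mult_right_mono) auto
    ultimately show ?thesis by simp
  qed
  have D0: "D \<ge> 0" using Pd0 D_def by simp
  have U1: "U \<le> 2 * \<eta> * m * D + \<mu> * S * V"
  proof -
    have "U \<le> (\<Sum>i<m. 2 * \<eta> * D + \<mu> * (\<beta> ^ i * V))" unfolding U_def using B4 by (intro sum_mono) auto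
    also have "\<dots> = 2 * \<eta> * m * D + \<mu> * S * V"
      by (simp add: sum.distrib S_def sum_distrib_left sum_distrib_right algebra_simps)
    finally show ?thesis .
  qed
  have B5: "D \<le> A + L * U"
  proof -
    have "D \<le> (\<Sum>i<m. norm (G i) + L * norm (Yh i - Z 0))"
      unfolding D_def Pd_def
    proof (intro sum_mono)
      fix i assume "i \<in> {..<m}"
      hence "norm (Dv i - G i) \<le> L * norm (Yh i - Z 0)" using hD by auto
      thus "norm (Dv i) \<le> norm (G i) + L * norm (Yh i - Z 0)" using norm_triangle_ineq2[of "Dv i" "G i"] by linarith
    qed
    also have "\<dots> \<le> A + L * U" using hA by (simp add: sum.distrib U_def sum_distrib_left)
    finally show ?thesis .
  qed
  have B6: "D \<le> 2 * A + 2 * L * \<mu> * S * V"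
  proof -
    have "L * U \<le> (\<eta> * L * m) * (2 * D) + L * (\<mu> * S * V)"
      using mult_left_mono[OF U1, of L] L by (simp add: algebra_simps)
    also have "(\<eta> * L * m) * (2 * D) \<le> (1/4) * (2 * D)" using etaLm D0 by (intro mult_right_mono) auto
    finally show ?thesis using B5 by (simp add: algebra_simps)
  qed
  have B7: "U \<le> 4 * \<eta> * m * A + 2 * \<mu> * S * V"
  proof -
    have "2 * \<eta> * m * D \<le> 2 * \<eta> * m * (2 * A + 2 * L * \<mu> * S * V)"
      using B6 \<eta>0 by (intro mult_left_mono) auto
    also have "\<dots> = 4 * \<eta> * m * A + 4 * (\<eta> * L * m) * (\<mu> * S * V)" by (simp add: algebra_simps)
    also have "4 * (\<eta> * L * m) * (\<mu> * S * V) \<le> 4 * (1/4) * (\<mu> * S * V)"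
      using etaLm \<mu>0 S0 V0 by (intro mult_right_mono mult_left_mono) auto
    finally show ?thesis using U1 by simp
  qed
  show "norm (W m) \<le> (1 - \<theta> / 2) * norm (W 0) + 2 * \<alpha> * A"
  proof -
    have "norm (W m) \<le> \<beta> ^ m * V + \<alpha> * D" using B2[of m] by (simp add: D_def)
    also have "\<alpha> * D \<le> \<alpha> * (2 * A + 2 * L * \<mu> * S * V)" using B6 \<alpha> by (intro mult_left_mono) auto
    also have "\<alpha> * (2 * A + 2 * L * \<mu> * S * V) = 2 * \<alpha> * A + 2 * L * (\<beta> * \<eta>) * S * V"
      unfolding \<alpha>\<mu>[symmetric] by (simp add: algebra_simps)
    also have "2 * L * (\<beta> * \<eta>) * S * V \<le> 2 * L * \<eta> * m * V"
    proof -
      have "(\<beta> * \<eta>) * S \<le> \<eta> * m" using \<beta>\<eta> Sm S0 \<eta>0 by (intro mult_mono) auto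
      hence "(\<beta> * \<eta>) * S * V \<le> (\<eta> * m) * V" using V0 by (intro mult_right_mono) auto
      hence "2 * L * ((\<beta> * \<eta>) * S * V) \<le> 2 * L * ((\<eta> * m) * V)" using L by (intro mult_left_mono) auto
      thus ?thesis by (simp add: mult_ac)
    qed
    also have "2 * L * \<eta> * m * V \<le> (\<theta> / 2) * V"
    proof -
      have "2 * L * \<eta> * m * V = (2 * (\<eta> * L * m)) * V" by (simp add: mult_ac)
      also have "\<dots> \<le> (\<theta> / 2) * V" using step V0 by (intro mult_right_mono) auto
      finally show ?thesis .
    qed
    finally have X: "norm (W m) \<le> \<beta> ^ m * V + (2 * \<alpha> * A + (\<theta> / 2) * V)" by simp
    have "\<beta> ^ m * V = V - \<theta> * V" by (simp add: \<theta>_def algebra_simps)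
    moreover have "(\<theta> / 2) * V = (\<theta> * V) / 2" by simp
    moreover have "(1 - \<theta> / 2) * V = V - (\<theta> * V) / 2" by (simp add: algebra_simps)
    ultimately show ?thesis using X unfolding V_def by linarith
  qed
  show "norm (Z m - Z 0) \<le> \<eta> * (2 * A + 2 * L * \<mu> * S * norm (W 0))"
  proof -
    have "\<eta> * D \<le> \<eta> * (2 * A + 2 * L * \<mu> * S * V)" using B6 \<eta>0 by (intro mult_left_mono) auto
    thus ?thesis using B1[of m] unfolding V_def D_def by linarith
  qed
  define e where "e = Z m - Z 0 + (\<eta> * m) *\<^sub>R gz"
  have e_eq: "e = - \<eta> *\<^sub>R (\<Sum>i<m. Dv i - G i)"
    unfolding e_def Zsum[of m] by (simp add: sum_subtractf hG scaleR_diff_right algebra_simps)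
  have e_bnd: "norm e \<le> \<eta> * L * U"
  proof -
    have "norm e = \<eta> * norm (\<Sum>i<m. Dv i - G i)" using \<eta>0 by (simp add: e_eq)
    also have "\<dots> \<le> \<eta> * (\<Sum>i<m. L * norm (Yh i - Z 0))"
      using \<eta>0 hD by (intro mult_left_mono order.trans[OF norm_sum sum_mono]) auto
    finally show ?thesis by (simp add: U_def sum_distrib_left mult.assoc)
  qed
  define a where "a = norm gz"
  define c where "c = \<eta> * m"
  have c0: "c > 0" using \<eta>0 m by (simp add: c_def)
  have Lc: "L * c \<le> 1 / 4" using etaLm by (simp add: c_def mult.commute mult.left_commute)
  have Zm: "Z m - Z 0 = - c *\<^sub>R gz + e" unfolding e_def c_def by simp
  have ip: "gz \<bullet> (Z m - Z 0) \<le> - c * a\<^sup>2 + a * norm e"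
  proof -
    have "gz \<bullet> (Z m - Z 0) = - c * a\<^sup>2 + gz \<bullet> e"
      by (simp add: Zm inner_add_right inner_diff_right a_def power2_norm_eq_inner)
    also have "gz \<bullet> e \<le> a * norm e" unfolding a_def by (rule norm_cauchy_schwarz)
    finally show ?thesis by simp
  qed
  have nz: "norm (Z m - Z 0) \<le> c * a + norm e"
    unfolding Zm a_def using c0 by (metis abs_of_pos norm_minus_cancel norm_scaleR norm_triangle_ineq scaleR_minus_left)
  have "L * (norm (Z m - Z 0))\<^sup>2 \<le> L * (c * a + norm e)\<^sup>2"
    using nz L by (intro mult_left_mono power_mono) auto
  moreover have "- c * a\<^sup>2 + a * norm e + L * (c * a + norm e)\<^sup>2 \<le> - (c / 4) * a\<^sup>2 + (2 / c) * (norm e)\<^sup>2"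
    using scalar_descent[OF c0 Lc _ _ norm_ge_zero, of a "norm e"] L by (simp add: a_def)
  ultimately have fd: "f (Z m) \<le> f (Z 0) - (c / 4) * a\<^sup>2 + (2 / c) * (norm e)\<^sup>2"
    using hf ip by linarith
  have U0: "U \<ge> 0" by (simp add: U_def sum_nonneg)
  have n1: "(norm e)\<^sup>2 \<le> \<eta>\<^sup>2 * L\<^sup>2 * U\<^sup>2"
  proof -
    have "(norm e)\<^sup>2 \<le> (\<eta> * L * U)\<^sup>2" using e_bnd by (intro power_mono) auto
    thus ?thesis by (simp add: power_mult_distrib)
  qed
  have n2: "U\<^sup>2 \<le> 32 * \<eta>\<^sup>2 * m\<^sup>2 * A\<^sup>2 + 8 * \<mu>\<^sup>2 * S\<^sup>2 * V\<^sup>2"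
  proof -
    have "U\<^sup>2 \<le> (4 * \<eta> * m * A + 2 * \<mu> * S * V)\<^sup>2" using B7 U0 by (intro power_mono) auto
    moreover have "0 \<le> (4 * \<eta> * m * A - 2 * \<mu> * S * V)\<^sup>2" by simp
    ultimately show ?thesis by (simp add: power2_eq_square algebra_simps)
  qed
  have "\<eta>\<^sup>2 * L\<^sup>2 * U\<^sup>2 \<le> \<eta>\<^sup>2 * L\<^sup>2 * (32 * \<eta>\<^sup>2 * m\<^sup>2 * A\<^sup>2 + 8 * \<mu>\<^sup>2 * S\<^sup>2 * V\<^sup>2)"
    using n2 by (intro mult_left_mono) auto
  with n1 have ne: "(norm e)\<^sup>2 \<le> \<eta>\<^sup>2 * L\<^sup>2 * (32 * \<eta>\<^sup>2 * m\<^sup>2 * A\<^sup>2 + 8 * \<mu>\<^sup>2 * S\<^sup>2 * V\<^sup>2)"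
    by linarith
  have "(2 / c) * (norm e)\<^sup>2 \<le> (2 / c) * (\<eta>\<^sup>2 * L\<^sup>2 * (32 * \<eta>\<^sup>2 * m\<^sup>2 * A\<^sup>2 + 8 * \<mu>\<^sup>2 * S\<^sup>2 * V\<^sup>2))"
    using ne c0 by (intro mult_left_mono) auto
  also have "\<dots> = 64 * \<eta> ^ 3 * m * L\<^sup>2 * A\<^sup>2 + 16 * \<eta> * L\<^sup>2 * \<mu>\<^sup>2 * S\<^sup>2 * V\<^sup>2 / m"
    using \<eta>0 m unfolding c_def by (simp add: field_simps power2_eq_square power3_eq_cube)
  finally show "f (Z m) \<le> f (Z 0) - (\<eta> * m / 4) * (norm gz)\<^sup>2 + 64 * \<eta> ^ 3 * m * L\<^sup>2 * A\<^sup>2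
                   + 16 * \<eta> * L\<^sup>2 * \<mu>\<^sup>2 * S\<^sup>2 * (norm (W 0))\<^sup>2 / m"
    using fd unfolding c_def a_def V_def by simp
qed


lemma batch_sum:
  fixes F :: "nat \<Rightarrow> 'b::comm_monoid_add"
  shows "(\<Sum>i<m. \<Sum>j = i * b + 1..Suc i * b. F j) = (\<Sum>j = 1..m * b. F j)"
proof (induction m)
  case 0 then show ?case by simp
next
  case (Suc m)
  have "(\<Sum>j = 1..m * b + b. F j) = (\<Sum>j = 1..m * b. F j) + (\<Sum>j = m * b + 1..m * b + b. F j)"
    by (rule sum.ub_add_nat) simp
  thus ?case using Suc by (simp add: add.commute)
qed

lemma card_batch: "card {i * b + 1..Suc i * b} = b"
  by simp

lemma epoch_rrm:
  fixes g :: "nat \<Rightarrow> 'a::real_inner \<Rightarrow> 'a" and gf :: "'a \<Rightarrow> 'a" and f :: "'a \<Rightarrow> real"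
    and p :: "nat \<Rightarrow> nat" and \<alpha> \<beta> lam L :: real and m b n :: nat and x xt :: 'a
  assumes b: "b > 0" and m: "m \<ge> 1" and n: "n = m * b"
    and p: "bij_betw p {1..n} {1..n}"
    and lip: "\<forall>i\<in>{1..n}. \<forall>u v. norm (g i u - g i v) \<le> L * norm (u - v)"
    and gfdef: "\<And>y. gf y = (1 / real n) *\<^sub>R (\<Sum>i = 1..n. g i y)"
    and desc: "\<And>x y. f y \<le> f x + gf x \<bullet> (y - x) + L * (norm (y - x))\<^sup>2"
    and \<beta>: "0 \<le> \<beta>" "\<beta> < 1" and \<alpha>: "\<alpha> > 0" and L: "L > 0"
    and lam: "0 \<le> lam" "lam \<le> \<beta> / (1 - \<beta>)"
    and step: "\<alpha> \<le> (1 - \<beta>) * (1 - \<beta> ^ m) / (4 * L * real m)"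
    and st: "st = rrm_inner g b p \<alpha> \<beta> lam (xt, x)"
  defines "z \<equiv> (1 / (1 - \<beta>)) *\<^sub>R x - (\<beta> / (1 - \<beta>)) *\<^sub>R xt"
    and "z' \<equiv> (1 / (1 - \<beta>)) *\<^sub>R snd (st m) - (\<beta> / (1 - \<beta>)) *\<^sub>R fst (st m)"
    and "A \<equiv> (1 / real b) * (\<Sum>j = 1..n. norm (g j ((1 / (1 - \<beta>)) *\<^sub>R x - (\<beta> / (1 - \<beta>)) *\<^sub>R xt)))"
    and "\<eta> \<equiv> \<alpha> / (1 - \<beta>)" and "\<mu> \<equiv> \<beta> / (1 - \<beta>)" and "\<theta> \<equiv> 1 - \<beta> ^ m"
    and "S \<equiv> (\<Sum>i<m. \<beta> ^ i)"
  shows "norm (snd (st m) - fst (st m)) \<le> (1 - \<theta> / 2) * norm (x - xt) + 2 * \<alpha> * A"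
    and "f z' \<le> f z - (\<eta> * m / 4) * (norm (gf z))\<^sup>2 + 64 * \<eta> ^ 3 * m * L\<^sup>2 * A\<^sup>2
                   + 16 * \<eta> * L\<^sup>2 * \<mu>\<^sup>2 * S\<^sup>2 * (norm (x - xt))\<^sup>2 / m"
    and "norm (z' - z) \<le> \<eta> * (2 * A + 2 * L * \<mu> * S * norm (x - xt))"
proof -
  define c where "c = 1 / (1 - \<beta>)"
  have c1: "c * (1 - \<beta>) = 1" using \<beta> by (simp add: c_def)
  have bc: "\<beta> / (1 - \<beta>) = \<beta> * c" by (simp add: c_def)
  define W where "W i = snd (st i) - fst (st i)" for i
  define Z where "Z i = c *\<^sub>R snd (st i) - (\<beta> * c) *\<^sub>R fst (st i)" for i
  define Yh where "Yh i = snd (st i) + lam *\<^sub>R W i" for i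
  define Dv where "Dv i = (1 / real b) *\<^sub>R (\<Sum>j = i * b + 1..Suc i * b. g (p j) (Yh i))" for i
  define G where "G i = (1 / real b) *\<^sub>R (\<Sum>j = i * b + 1..Suc i * b. g (p j) (Z 0))" for i
  have stS: "st (Suc i) = (snd (st i), snd (st i) - \<alpha> *\<^sub>R Dv i + \<beta> *\<^sub>R W i)" for i
    by (simp add: st rrm_step_def Let_def Dv_def Yh_def W_def)
  have st0: "st 0 = (xt, x)" by (simp add: st)
  have Z0: "Z 0 = z" by (simp add: Z_def z_def st0 c_def)
  have Zm: "Z m = z'" by (simp add: Z_def z'_def c_def)
  have W0: "W 0 = x - xt" by (simp add: W_def st0)
  have hW: "W (Suc i) = \<beta> *\<^sub>R W i - \<alpha> *\<^sub>R Dv i" for i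
    by (simp add: W_def stS algebra_simps)
  have hZ: "Z (Suc i) = Z i - \<eta> *\<^sub>R Dv i" for i
  proof -
    have "\<eta> = c * \<alpha>" by (simp add: \<eta>_def c_def)
    thus ?thesis by (simp add: Z_def stS W_def algebra_simps)
  qed
  have hY: "Yh i - Z i = (lam - \<mu>) *\<^sub>R W i" for i
  proof -
    have e: "1 - c + \<beta> * c = 0" using c1 by (simp add: algebra_simps)
    have "Yh i - Z i = (lam - \<beta> * c) *\<^sub>R W i + (1 - c + \<beta> * c) *\<^sub>R snd (st i)"
      by (simp add: Yh_def Z_def W_def algebra_simps)
    thus ?thesis using e by (simp add: \<mu>_def bc)
  qed
  have batch_in: "j \<in> {1..n}" if "i < m" "j \<in> {i * b + 1..Suc i * b}" for i j
  proof -
    have "Suc i * b \<le> m * b" using that(1) by (intro mult_right_mono) auto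
    thus ?thesis using that n by auto
  qed
  have hD: "norm (Dv i - G i) \<le> L * norm (Yh i - Z 0)" if i: "i < m" for i
  proof -
    have "Dv i - G i = (1 / real b) *\<^sub>R (\<Sum>j = i * b + 1..Suc i * b. g (p j) (Yh i) - g (p j) (Z 0))"
      by (simp add: Dv_def G_def sum_subtractf scaleR_diff_right)
    hence "norm (Dv i - G i) = (1 / real b) * norm (\<Sum>j = i * b + 1..Suc i * b. g (p j) (Yh i) - g (p j) (Z 0))"
      by simp
    also have "\<dots> \<le> (1 / real b) * (\<Sum>j = i * b + 1..Suc i * b. L * norm (Yh i - Z 0))"
    proof (intro mult_left_mono order.trans[OF norm_sum sum_mono])
      fix j assume "j \<in> {i * b + 1..Suc i * b}"
      hence "p j \<in> {1..n}" using batch_in[OF i] p by (auto simp: bij_betw_def)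
      thus "norm (g (p j) (Yh i) - g (p j) (Z 0)) \<le> L * norm (Yh i - Z 0)" using lip by auto
    qed auto
    also have "\<dots> = L * norm (Yh i - Z 0)" using b by simp
    finally show ?thesis .
  qed
  have sumg: "(\<Sum>i = 1..n. g i y) = real n *\<^sub>R gf y" for y
    using m b n by (simp add: gfdef)
  have hG: "(\<Sum>i<m. G i) = real m *\<^sub>R gf (Z 0)"
  proof -
    have bs: "(\<Sum>i<m. \<Sum>j = i * b + 1..Suc i * b. g (p j) (Z 0)) = (\<Sum>j = 1..n. g (p j) (Z 0))"
      unfolding n by (rule batch_sum)
    have "(\<Sum>i<m. G i) = (1 / real b) *\<^sub>R (\<Sum>i<m. \<Sum>j = i * b + 1..Suc i * b. g (p j) (Z 0))"
      unfolding G_def by (rule scaleR_sum_right[symmetric])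
    also note bs
    also have "(\<Sum>j = 1..n. g (p j) (Z 0)) = (\<Sum>j = 1..n. g j (Z 0))"
      by (rule sum.reindex_bij_betw[OF p])
    also have "\<dots> = real n *\<^sub>R gf (Z 0)" by (rule sumg)
    finally show ?thesis using b n by simp
  qed
  have hA: "(\<Sum>i<m. norm (G i)) \<le> A"
  proof -
    have "(\<Sum>i<m. norm (G i)) \<le> (\<Sum>i<m. (1 / real b) * (\<Sum>j = i * b + 1..Suc i * b. norm (g (p j) (Z 0))))"
      unfolding G_def by (intro sum_mono) (simp add: norm_sum divide_right_mono)
    also have "\<dots> = (1 / real b) * (\<Sum>i<m. \<Sum>j = i * b + 1..Suc i * b. norm (g (p j) (Z 0)))"
      by (rule sum_distrib_left[symmetric])
    also have "(\<Sum>i<m. \<Sum>j = i * b + 1..Suc i * b. norm (g (p j) (Z 0))) = (\<Sum>j = 1..n. norm (g (p j) (Z 0)))"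
      unfolding n by (rule batch_sum)
    also have "(\<Sum>j = 1..n. norm (g (p j) (Z 0))) = (\<Sum>j = 1..n. norm (g j (Z 0)))"
      by (rule sum.reindex_bij_betw[OF p])
    finally show ?thesis by (simp add: A_def Z0[unfolded z_def])
  qed
  have hf: "f (Z m) \<le> f (Z 0) + gf (Z 0) \<bullet> (Z m - Z 0) + L * (norm (Z m - Z 0))\<^sup>2"
    by (rule desc)
  have stepe: "\<eta> * L * m \<le> \<theta> / 4"
  proof -
    have "\<eta> = \<alpha> / (1 - \<beta>)" by (simp add: \<eta>_def)
    also have "\<dots> \<le> ((1 - \<beta>) * (1 - \<beta> ^ m) / (4 * L * real m)) / (1 - \<beta>)"
      using step \<beta> by (intro divide_right_mono) auto
    also have "\<dots> = \<theta> / (4 * L * real m)" using \<beta> by (simp add: \<theta>_def)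
    finally have "\<eta> \<le> \<theta> / (4 * L * real m)" .
    hence "\<eta> * (L * m) \<le> \<theta> / (4 * L * real m) * (L * m)" using L m by (intro mult_right_mono) auto
    also have "\<dots> = \<theta> / 4" using L m by (simp add: field_simps)
    finally show ?thesis by (simp add: mult.assoc)
  qed
  note E = epoch_abstract[of \<beta> \<alpha> L m lam \<mu> \<eta> \<theta> S W Dv Z Yh G "gf (Z 0)" A f,
      OF \<beta> \<alpha> L m lam(1) lam(2)[folded \<mu>_def] \<eta>_def[THEN meta_eq_to_obj_eq] \<mu>_def[THEN meta_eq_to_obj_eq] \<theta>_def[THEN meta_eq_to_obj_eq] S_def[THEN meta_eq_to_obj_eq] stepe hW hZ hY hD hG hA hf]
  show "norm (snd (st m) - fst (st m)) \<le> (1 - \<theta> / 2) * norm (x - xt) + 2 * \<alpha> * A"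
    using E(1) by (simp add: W_def W0[unfolded W_def])
  show "f z' \<le> f z - (\<eta> * m / 4) * (norm (gf z))\<^sup>2 + 64 * \<eta> ^ 3 * m * L\<^sup>2 * A\<^sup>2
                   + 16 * \<eta> * L\<^sup>2 * \<mu>\<^sup>2 * S\<^sup>2 * (norm (x - xt))\<^sup>2 / m"
    using E(2) by (simp add: Z0 Zm W0)
  show "norm (z' - z) \<le> \<eta> * (2 * A + 2 * L * \<mu> * S * norm (x - xt))"
    using E(3) by (simp add: Z0 Zm W0)
qed


lemma sq_rec:
  fixes V V' t \<theta> :: real
  assumes \<theta>: "0 < \<theta>" "\<theta> \<le> 1" and V: "V \<ge> 0" and t: "t \<ge> 0" and V': "0 \<le> V'"
    and r: "V' \<le> (1 - \<theta> / 2) * V + t"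
  shows "V'\<^sup>2 \<le> (1 - \<theta> / 2) * V\<^sup>2 + (3 / \<theta>) * t\<^sup>2"
proof -
  define q where "q = 1 - \<theta> / 2"
  have q: "0 \<le> q" "q \<le> 1" using \<theta> by (auto simp: q_def)
  have "V'\<^sup>2 \<le> (q * V + t)\<^sup>2" using r V' by (intro power_mono) (auto simp: q_def)
  also have "(q * V + t)\<^sup>2 = q\<^sup>2 * V\<^sup>2 + 2 * (q * V) * t + t\<^sup>2" by (simp add: power2_eq_square algebra_simps)
  also have "2 * (q * V) * t \<le> (\<theta> / 2) * (q * V)\<^sup>2 + (2 / \<theta>) * t\<^sup>2"
  proof -
    have "0 \<le> (2 / \<theta>) * ((\<theta> / 2) * (q * V) - t)\<^sup>2" using \<theta> by simp
    also have "(2 / \<theta>) * ((\<theta> / 2) * (q * V) - t)\<^sup>2 = (\<theta> / 2) * (q * V)\<^sup>2 - 2 * (q * V) * t + (2 / \<theta>) * t\<^sup>2"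
      using \<theta> by (simp add: power2_eq_square field_simps)
    finally show ?thesis by simp
  qed
  also have "q\<^sup>2 * V\<^sup>2 + ((\<theta> / 2) * (q * V)\<^sup>2 + (2 / \<theta>) * t\<^sup>2) + t\<^sup>2
      = (q * (q * (1 + \<theta> / 2))) * V\<^sup>2 + (1 + 2 / \<theta>) * t\<^sup>2"
    by (simp add: power2_eq_square algebra_simps)
  also have "q * (1 + \<theta> / 2) \<le> 1" unfolding q_def by (simp add: algebra_simps)
  hence "(q * (q * (1 + \<theta> / 2))) * V\<^sup>2 \<le> q * V\<^sup>2" using q
    by (intro mult_right_mono) (auto simp: mult_left_le)
  also have "(1 + 2 / \<theta>) * t\<^sup>2 \<le> (3 / \<theta>) * t\<^sup>2"
  proof (intro mult_right_mono)
    show "1 + 2 / \<theta> \<le> 3 / \<theta>" using \<theta> by (simp add: field_simps)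
  qed simp
  finally show ?thesis unfolding q_def by simp
qed


theorem theorem5p1:
  fixes fi :: "nat \<Rightarrow> 'a::euclidean_space \<Rightarrow> real"
    and g :: "nat \<Rightarrow> 'a \<Rightarrow> 'a"
    and gf :: "'a \<Rightarrow> 'a"
    and n b :: nat
    and L fbar beta lam :: real
    and alpha :: "nat \<Rightarrow> real"
    and prm :: "nat \<Rightarrow> nat \<Rightarrow> nat"
    and x1 :: 'a
  defines "f \<equiv> (\<lambda>x. (1 / real n) * (\<Sum>i = 1..n. fi i x))"
    and "m \<equiv> n div b"
    and "x \<equiv> rrm_x g n b prm alpha beta lam x1"
    and "z \<equiv> rrm_z g n b prm alpha beta lam x1"
  assumes n_pos: "n > 0" and b_pos: "b > 0" and b_dvd: "b dvd n"
    and grad_i: "\<forall>i\<in>{1..n}. \<forall>y. GDERIV (fi i) y :> g i y"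
    and grad_cont: "\<forall>i\<in>{1..n}. continuous_on UNIV (g i)"
    and grad_f: "\<forall>y. GDERIV f y :> gf y"
    and L_pos: "L > 0"
    and lip: "\<forall>i\<in>{1..n}. \<forall>u v. norm (g i u - g i v) \<le> L * norm (u - v)"
    and lower: "\<forall>i\<in>{1..n}. \<forall>y. fi i y \<ge> fbar"
    and alpha_pos: "\<forall>k\<ge>1. alpha k > 0"
    and alpha_noninc: "\<forall>k\<ge>1. alpha (Suc k) \<le> alpha k"
    and beta: "0 \<le> beta" "beta < 1"
    and lam: "0 \<le> lam" "lam \<le> beta / (1 - beta)"
    and alpha_bound: "\<forall>k\<ge>1. alpha k \<le> (1 - beta) * (1 - beta ^ m) / (4 * L * real m)"
    and alpha_div: "filterlim (\<lambda>T. \<Sum>k = 1..T. alpha k) at_top sequentially"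
    and alpha_cube: "summable (\<lambda>k. (alpha (Suc k)) ^ 3)"
    and perm_ax: "\<forall>k\<ge>1. bij_betw (prm k) {1..n} {1..n}"
  shows "summable (\<lambda>k. alpha (Suc k) * (norm (gf (x (Suc k))))\<^sup>2)
       \<and> ((\<lambda>T. (\<Sum>k = 1..T. alpha k) * Min ((\<lambda>k. (norm (gf (x k)))\<^sup>2) ` {1..T}))
            \<longlonglongrightarrow> 0)
       \<and> ((\<lambda>k. norm (gf (x k))) \<longlonglongrightarrow> 0)
       \<and> ((\<lambda>k. norm (gf (z k))) \<longlonglongrightarrow> 0)
       \<and> (\<forall>p. (\<exists>r. strict_mono r \<and> (x \<circ> r) \<longlonglongrightarrow> p) \<longrightarrow> gf p = 0)
       \<and> (\<forall>p. (\<exists>r. strict_mono r \<and> (z \<circ> r) \<longlonglongrightarrow> p) \<longrightarrow> gf p = 0)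
       \<and> (\<exists>fstar. ((\<lambda>k. f (x k)) \<longlonglongrightarrow> fstar) \<and> ((\<lambda>k. f (z k)) \<longlonglongrightarrow> fstar))"
proof -
  have m1: "m \<ge> 1" using n_pos b_pos b_dvd unfolding m_def
    by (metis One_nat_def dvd_div_eq_0_iff less_one not_less not_less_zero nat_neq_iff)
  have nmb: "n = m * b" using b_dvd unfolding m_def by simp
  have mpos: "real m > 0" using m1 by simp
  have gfdef: "gf y = (1 / real n) *\<^sub>R (\<Sum>i = 1..n. g i y)" for y
  proof -
    define G where "G = (1 / real n) *\<^sub>R (\<Sum>i = 1..n. g i y)"
    have d1: "(f has_derivative (\<lambda>h. (1 / real n) * (\<Sum>i = 1..n. h \<bullet> g i y))) (at y)"
      unfolding f_def
      by (intro has_derivative_mult_right has_derivative_sum) (use grad_i in \<open>auto simp: gderiv_def\<close>)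
    have d2: "(f has_derivative (\<lambda>h. h \<bullet> gf y)) (at y)" using grad_f by (simp add: gderiv_def)
    have "(\<lambda>h. (1 / real n) * (\<Sum>i = 1..n. h \<bullet> g i y)) = (\<lambda>h. h \<bullet> gf y)"
      by (rule has_derivative_unique[OF d1 d2])
    hence e: "(1 / real n) * (\<Sum>i = 1..n. h \<bullet> g i y) = h \<bullet> gf y" for h by metis
    have hG: "h \<bullet> G = h \<bullet> gf y" for h using e[of h] by (simp add: G_def inner_sum_right)
    have "(G - gf y) \<bullet> (G - gf y) = 0" by (simp add: inner_diff_right hG)
    thus ?thesis by (simp add: G_def)
  qed
  have lipf: "norm (gf u - gf v) \<le> L * norm (u - v)" for u v
  proof -
    have "gf u - gf v = (1 / real n) *\<^sub>R (\<Sum>i = 1..n. g i u - g i v)"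
      by (simp add: gfdef sum_subtractf scaleR_diff_right)
    hence "norm (gf u - gf v) = (1 / real n) * norm (\<Sum>i = 1..n. g i u - g i v)" by simp
    also have "\<dots> \<le> (1 / real n) * (\<Sum>i = 1..n. L * norm (u - v))"
      using lip by (intro mult_left_mono order.trans[OF norm_sum sum_mono]) auto
    also have "\<dots> = L * norm (u - v)" using n_pos by simp
    finally show ?thesis .
  qed
  have derf: "(f has_derivative (\<lambda>h. h \<bullet> gf y)) (at y)" for y using grad_f by (simp add: gderiv_def)
  have desc: "f y \<le> f x + gf x \<bullet> (y - x) + L * (norm (y - x))\<^sup>2" for x y
    by (rule descent_lemma[of f gf L, OF derf lipf]) (use L_pos in auto)
  have gsq: "(norm (g i y))\<^sup>2 \<le> 4 * L * (fi i y - fbar)" if "i \<in> {1..n}" for i y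
    by (rule grad_sq_bound[of "fi i" "g i" L fbar]) (use that grad_i lip lower L_pos in \<open>auto simp: gderiv_def\<close>)
  have fsum: "(\<Sum>i = 1..n. fi i y) = real n * f y" for y using n_pos by (simp add: f_def)
  have fsum': "(\<Sum>i = Suc 0..n. fi i y) = real n * f y" for y using fsum[of y] by simp
  have ffbar: "f y \<ge> fbar" for y
  proof -
    have "(\<Sum>i = 1..n. fbar) \<le> (\<Sum>i = 1..n. fi i y)" using lower by (intro sum_mono) auto
    hence "real n * fbar \<le> real n * f y" using fsum[of y] by simp
    thus ?thesis using n_pos by simp
  qed
  define Af where "Af y = (1 / real b) * (\<Sum>j = 1..n. norm (g j y))" for y
  have Af0: "Af y \<ge> 0" for y by (simp add: Af_def sum_nonneg)
  have Asq: "(Af y)\<^sup>2 \<le> 4 * L * (real m)\<^sup>2 * (f y - fbar)" for y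
  proof -
    have "(\<Sum>j = 1..n. norm (g j y))\<^sup>2 \<le> (\<Sum>j = 1..n. (norm (g j y))\<^sup>2) * real n"
      using sum_squared_le_sum_of_squares[of "\<lambda>j. norm (g j y)" "{1..n}"] by simp
    also have "(\<Sum>j = 1..n. (norm (g j y))\<^sup>2) \<le> (\<Sum>j = 1..n. 4 * L * (fi j y - fbar))"
      using gsq by (intro sum_mono) auto
    also have "(\<Sum>j = 1..n. 4 * L * (fi j y - fbar)) = 4 * L * (real n * f y - real n * fbar)"
      by (simp add: sum_distrib_left[symmetric] sum_subtractf fsum fsum')
    finally have "(\<Sum>j = 1..n. norm (g j y))\<^sup>2 \<le> 4 * L * (real n * (f y - fbar)) * real n"
      using n_pos by (simp add: algebra_simps)
    hence "(Af y)\<^sup>2 \<le> (1 / real b)\<^sup>2 * (4 * L * (real n * (f y - fbar)) * real n)"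
      unfolding Af_def power_mult_distrib by (intro mult_left_mono) auto
    also have "\<dots> = 4 * L * (real m)\<^sup>2 * (f y - fbar)"
      using b_pos by (simp add: nmb power2_eq_square field_simps)
    finally show ?thesis .
  qed
  define xt where "xt = rrm_xt g n b prm alpha beta lam x1"
  have zdef: "z k = (1 / (1 - beta)) *\<^sub>R x k - (beta / (1 - beta)) *\<^sub>R xt k" for k
    by (simp add: z_def x_def xt_def rrm_z_def)
  have stSuc: "rrm_state g n b prm alpha beta lam x1 (Suc k)
      = rrm_inner g b (prm k) (alpha k) beta lam (xt k, x k) m" if "k \<ge> 1" for k
    using that by (simp add: x_def xt_def rrm_x_def rrm_xt_def m_def)
  define V where "V k = norm (x k - xt k)" for k
  define \<theta> where "\<theta> = 1 - beta ^ m"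
  define \<mu> where "\<mu> = beta / (1 - beta)"
  define S where "S = (\<Sum>i<m. beta ^ i)"
  define c where "c = 1 / (1 - beta)"
  define \<eta> where "\<eta> k = alpha k / (1 - beta)" for k
  have \<theta>pos: "\<theta> > 0" using beta m1 unfolding \<theta>_def by (simp add: power_less_one_iff)
  have \<theta>1: "\<theta> \<le> 1" using beta unfolding \<theta>_def by simp
  have c0: "c > 0" using beta by (simp add: c_def)
  have \<eta>c: "\<eta> k = c * alpha k" for k by (simp add: \<eta>_def c_def)
  have \<mu>0: "\<mu> \<ge> 0" using beta by (simp add: \<mu>_def)
  have S0: "S \<ge> 0" unfolding S_def using beta by (intro sum_nonneg) auto
  have epoch: "V (Suc k) \<le> (1 - \<theta> / 2) * V k + 2 * alpha k * Af (z k)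
    \<and> f (z (Suc k)) \<le> f (z k) - (\<eta> k * m / 4) * (norm (gf (z k)))\<^sup>2 + 64 * \<eta> k ^ 3 * m * L\<^sup>2 * (Af (z k))\<^sup>2
                   + 16 * \<eta> k * L\<^sup>2 * \<mu>\<^sup>2 * S\<^sup>2 * (V k)\<^sup>2 / m
    \<and> norm (z (Suc k) - z k) \<le> \<eta> k * (2 * Af (z k) + 2 * L * \<mu> * S * V k)" if k: "k \<ge> 1" for k
  proof -
    define st where "st = rrm_inner g b (prm k) (alpha k) beta lam (xt k, x k)"
    have xs: "x (Suc k) = snd (st m)" "xt (Suc k) = fst (st m)"
      using stSuc[OF k] by (simp_all add: st_def x_def xt_def rrm_x_def rrm_xt_def)
    have ak: "alpha k > 0" using alpha_pos k by auto
    have bk: "alpha k \<le> (1 - beta) * (1 - beta ^ m) / (4 * L * real m)" using alpha_bound k by auto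
    have pk: "bij_betw (prm k) {1..n} {1..n}" using perm_ax k by auto
    note E = epoch_rrm[OF b_pos m1 nmb pk lip gfdef desc beta ak L_pos lam bk st_def]
    show ?thesis
      using E unfolding xs[symmetric] zdef[symmetric] V_def[symmetric] Af_def[symmetric]
      by (simp add: V_def zdef \<theta>_def \<mu>_def S_def \<eta>_def Af_def)
  qed
  define Q where "Q = 16 * L\<^sup>2 * \<mu>\<^sup>2 * S\<^sup>2 / m"
  define W where "W = 2 * (Q + 1) / \<theta>"
  define K1 where "K1 = 64 * c ^ 3 * m * L\<^sup>2 + 12 * W * c / \<theta>"
  define C where "C = K1 * (4 * L * (real m)\<^sup>2)"
  define \<Phi> where "\<Phi> k = f (z k) - fbar + W * \<eta> k * (V k)\<^sup>2" for k
  have Q0: "Q \<ge> 0" by (simp add: Q_def)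
  have W0: "W \<ge> 0" using Q0 \<theta>pos by (simp add: W_def)
  have K10: "K1 \<ge> 0" using W0 c0 \<theta>pos by (simp add: K1_def)
  have C0: "C \<ge> 0" using K10 L_pos by (simp add: C_def)
  have V0: "V k \<ge> 0" for k by (simp add: V_def)
  have \<eta>0: "\<eta> k \<ge> 0" if "k \<ge> 1" for k using alpha_pos that beta by (auto simp: \<eta>_def)
  have \<eta>mono: "\<eta> (Suc k) \<le> \<eta> k" if "k \<ge> 1" for k
    using alpha_noninc that beta by (auto simp: \<eta>_def divide_right_mono)
  have \<Phi>ge: "\<Phi> k \<ge> f (z k) - fbar" if "k \<ge> 1" for k
    using W0 \<eta>0[OF that] by (simp add: \<Phi>_def)
  have \<Phi>0: "\<Phi> k \<ge> 0" if "k \<ge> 1" for k using \<Phi>ge[OF that] ffbar[of "z k"] by linarith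
  have lyap: "\<Phi> (Suc k) \<le> (1 + C * alpha k ^ 3) * \<Phi> k
      - ((\<eta> k * m / 4) * (norm (gf (z k)))\<^sup>2 + \<eta> k * (V k)\<^sup>2)" if k: "k \<ge> 1" for k
  proof -
    define A where "A = Af (z k)"
    have e1: "V (Suc k) \<le> (1 - \<theta> / 2) * V k + 2 * alpha k * A"
      and e2: "f (z (Suc k)) \<le> f (z k) - (\<eta> k * m / 4) * (norm (gf (z k)))\<^sup>2 + 64 * \<eta> k ^ 3 * m * L\<^sup>2 * A\<^sup>2
                   + 16 * \<eta> k * L\<^sup>2 * \<mu>\<^sup>2 * S\<^sup>2 * (V k)\<^sup>2 / m"
      using epoch[OF k] by (simp_all add: A_def)
    have ak: "alpha k > 0" using alpha_pos k by auto
    have sq: "(V (Suc k))\<^sup>2 \<le> (1 - \<theta> / 2) * (V k)\<^sup>2 + (3 / \<theta>) * (2 * alpha k * A)\<^sup>2"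
      by (rule sq_rec[OF \<theta>pos \<theta>1 V0 _ V0 e1]) (use ak Af0 in \<open>simp add: A_def\<close>)
    have h1: "W * \<eta> (Suc k) * (V (Suc k))\<^sup>2 \<le> W * \<eta> k * (V (Suc k))\<^sup>2"
      using W0 \<eta>mono[OF k] by (intro mult_right_mono mult_left_mono) auto
    have h2: "W * \<eta> k * (V (Suc k))\<^sup>2 \<le> W * \<eta> k * ((1 - \<theta> / 2) * (V k)\<^sup>2 + (3 / \<theta>) * (2 * alpha k * A)\<^sup>2)"
      using sq W0 \<eta>0[OF k] by (intro mult_left_mono) auto
    have h3: "W * \<eta> k * ((1 - \<theta> / 2) * (V k)\<^sup>2 + (3 / \<theta>) * (2 * alpha k * A)\<^sup>2)
        = W * \<eta> k * ((1 - \<theta> / 2) * (V k)\<^sup>2) + W * \<eta> k * ((3 / \<theta>) * (2 * alpha k * A)\<^sup>2)"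
      by (simp add: algebra_simps)
    have h4: "16 * \<eta> k * L\<^sup>2 * \<mu>\<^sup>2 * S\<^sup>2 * (V k)\<^sup>2 / m + W * \<eta> k * ((1 - \<theta> / 2) * (V k)\<^sup>2)
        = W * \<eta> k * (V k)\<^sup>2 - \<eta> k * (V k)\<^sup>2"
    proof -
      have i1: "16 * \<eta> k * L\<^sup>2 * \<mu>\<^sup>2 * S\<^sup>2 * (V k)\<^sup>2 / m = Q * (\<eta> k * (V k)\<^sup>2)" by (simp add: Q_def)
      have i2: "W * \<eta> k * ((1 - \<theta> / 2) * (V k)\<^sup>2) = W * \<eta> k * (V k)\<^sup>2 - (W * \<theta> / 2) * (\<eta> k * (V k)\<^sup>2)"
        by (simp add: algebra_simps)
      have i3: "W * \<theta> / 2 = Q + 1" using \<theta>pos by (simp add: W_def)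
      show ?thesis unfolding i1 i2 i3 by (simp add: algebra_simps)
    qed
    have h5: "64 * \<eta> k ^ 3 * m * L\<^sup>2 * A\<^sup>2 + W * \<eta> k * ((3 / \<theta>) * (2 * alpha k * A)\<^sup>2) = K1 * alpha k ^ 3 * A\<^sup>2"
      unfolding \<eta>c K1_def using \<theta>pos by (simp add: field_simps power2_eq_square power3_eq_cube)
    have h6: "K1 * alpha k ^ 3 * A\<^sup>2 \<le> K1 * alpha k ^ 3 * (4 * L * (real m)\<^sup>2 * \<Phi> k)"
    proof (intro mult_left_mono)
      have "A\<^sup>2 \<le> 4 * L * (real m)\<^sup>2 * (f (z k) - fbar)" unfolding A_def by (rule Asq)
      also have "\<dots> \<le> 4 * L * (real m)\<^sup>2 * \<Phi> k" using \<Phi>ge[OF k] L_pos by (intro mult_left_mono) auto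
      finally show "A\<^sup>2 \<le> 4 * L * (real m)\<^sup>2 * \<Phi> k" .
    qed (use K10 ak in auto)
    have h7: "(1 + C * alpha k ^ 3) * \<Phi> k = \<Phi> k + K1 * alpha k ^ 3 * (4 * L * (real m)\<^sup>2 * \<Phi> k)"
      by (simp add: C_def algebra_simps)
    have h8: "\<Phi> (Suc k) = f (z (Suc k)) - fbar + W * \<eta> (Suc k) * (V (Suc k))\<^sup>2" by (simp add: \<Phi>_def)
    have h9: "\<Phi> k = f (z k) - fbar + W * \<eta> k * (V k)\<^sup>2" by (simp add: \<Phi>_def)
    show ?thesis using e2 h1 h2 h3 h4 h5 h6 h7 h8 h9 by linarith
  qed
  define P where "P j = \<Phi> (Suc j)" for j
  define ac where "ac j = C * alpha (Suc j) ^ 3" for j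
  define bb where "bb j = (\<eta> (Suc j) * m / 4) * (norm (gf (z (Suc j))))\<^sup>2 + \<eta> (Suc j) * (V (Suc j))\<^sup>2" for j
  have apos: "alpha (Suc j) > 0" for j using alpha_pos by simp
  have apos': "alpha (Suc j) \<ge> 0" for j using apos[of j] by simp
  have ac0: "ac j \<ge> 0" for j using C0 apos[of j] by (simp add: ac_def)
  have bb0: "bb j \<ge> 0" for j using \<eta>0[of "Suc j"] mpos by (simp add: bb_def)
  have sac: "summable ac" unfolding ac_def by (intro summable_mult alpha_cube)
  have RS: "summable bb" "convergent P" "\<And>j. P j \<le> P 0 * exp (suminf ac)"
  proof -
    have P0': "P j \<ge> 0" for j using \<Phi>0[of "Suc j"] by (simp add: P_def)
    have rec': "P (Suc j) \<le> (1 + ac j) * P j - bb j" for j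
      using lyap[of "Suc j"] by (simp add: P_def ac_def bb_def)
    show "summable bb" "convergent P" "\<And>j. P j \<le> P 0 * exp (suminf ac)"
      using robbins_siegmund[of P ac bb, OF P0' ac0 bb0 sac rec'] by auto
  qed
  define M where "M = P 0 * exp (suminf ac)"
  have PM: "\<Phi> k \<le> M" if "k \<ge> 1" for k
    using RS(3)[of "k - 1"] that by (simp add: P_def M_def)
  define AB where "AB = sqrt (4 * L * (real m)\<^sup>2 * M)"
  have AfB: "Af (z k) \<le> AB" if "k \<ge> 1" for k
  proof -
    have "(Af (z k))\<^sup>2 \<le> 4 * L * (real m)\<^sup>2 * (f (z k) - fbar)" by (rule Asq)
    also have "\<dots> \<le> 4 * L * (real m)\<^sup>2 * M"
      using \<Phi>ge[OF that] PM[OF that] L_pos by (intro mult_left_mono) auto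
    finally show ?thesis unfolding AB_def by (rule real_le_rsqrt)
  qed
  have AB0: "AB \<ge> 0" using AfB[of 1] Af0[of "z 1"] by simp
  have al0: "(\<lambda>j. alpha (Suc j)) \<longlonglongrightarrow> 0"
  proof -
    have "(\<lambda>j. alpha (Suc j) ^ 3) \<longlonglongrightarrow> 0" by (rule summable_LIMSEQ_zero[OF alpha_cube])
    hence "(\<lambda>j. root 3 (alpha (Suc j) ^ 3)) \<longlonglongrightarrow> root 3 0" by (intro tendsto_real_root)
    moreover have "root 3 (alpha (Suc j) ^ 3) = alpha (Suc j)" for j
      using apos[of j] by (intro real_root_power_cancel) auto
    ultimately show ?thesis by simp
  qed
  have Vlim': "(\<lambda>j. V (Suc j)) \<longlonglongrightarrow> 0"
  proof (rule linear_rec_zero[of "\<lambda>j. V (Suc j)" "1 - \<theta> / 2" "\<lambda>j. 2 * alpha (Suc j) * AB"])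
    fix j
    have "V (Suc (Suc j)) \<le> (1 - \<theta> / 2) * V (Suc j) + 2 * alpha (Suc j) * Af (z (Suc j))"
      using epoch[of "Suc j"] by simp
    also have "2 * alpha (Suc j) * Af (z (Suc j)) \<le> 2 * alpha (Suc j) * AB"
      using AfB[of "Suc j"] apos apos' by (intro mult_left_mono) auto
    finally show "V (Suc (Suc j)) \<le> (1 - \<theta> / 2) * V (Suc j) + 2 * alpha (Suc j) * AB" by simp
  next
    show "(\<lambda>j. 2 * alpha (Suc j) * AB) \<longlonglongrightarrow> 0"
      using tendsto_mult[OF tendsto_mult[OF tendsto_const al0] tendsto_const, of 2 AB] by simp
  qed (use V0 \<theta>pos \<theta>1 in auto)
  have Vlim: "V \<longlonglongrightarrow> 0" using Vlim' by (rule LIMSEQ_imp_Suc)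
  obtain VB where VB: "VB > 0" "\<And>j. norm (V (Suc j)) \<le> VB"
  proof -
    have "Bseq (\<lambda>j. V (Suc j))" using Vlim' by (intro convergent_imp_Bseq) (auto simp: convergent_def)
    then obtain K where "K > 0" "\<And>j. norm (V (Suc j)) \<le> K" by (auto elim!: BseqE)
    thus ?thesis using that by blast
  qed
  define C2 where "C2 = L * c * (2 * AB + 2 * L * \<mu> * S * VB) + 1"
  have C2pos: "C2 > 0"
  proof -
    have "0 \<le> 2 * L * \<mu> * S * VB" using L_pos \<mu>0 S0 VB(1) by simp
    hence "0 \<le> L * c * (2 * AB + 2 * L * \<mu> * S * VB)" using L_pos c0 AB0 by simp
    thus ?thesis by (simp add: C2_def)
  qed
  have divs: "filterlim (\<lambda>T. \<Sum>k<T. alpha (Suc k)) at_top sequentially"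
  proof -
    have "(\<lambda>T. \<Sum>k = 1..T. alpha k) = (\<lambda>T. \<Sum>k<T. alpha (Suc k))"
      by (simp only: One_nat_def sum.atLeast1_atMost_eq)
    thus ?thesis using alpha_div by simp
  qed
  have hz': "(\<lambda>j. norm (gf (z (Suc j)))) \<longlonglongrightarrow> 0"
  proof (rule slow_var_zero[of "\<lambda>j. alpha (Suc j)" _ C2])
    show "summable (\<lambda>j. alpha (Suc j) * (norm (gf (z (Suc j))))\<^sup>2)"
    proof (rule summable_comparison_test'[where g = "\<lambda>j. (4 * (1 - beta) / m) * bb j"])
      show "summable (\<lambda>j. (4 * (1 - beta) / m) * bb j)" by (intro summable_mult RS(1))
      fix j
      have "alpha (Suc j) * (norm (gf (z (Suc j))))\<^sup>2
          = (4 * (1 - beta) / m) * ((\<eta> (Suc j) * m / 4) * (norm (gf (z (Suc j))))\<^sup>2)"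
        using beta mpos by (simp add: \<eta>_def field_simps)
      also have "\<dots> \<le> (4 * (1 - beta) / m) * bb j"
        using beta mpos \<eta>0[of "Suc j"] by (intro mult_left_mono) (auto simp: bb_def)
      finally show "norm (alpha (Suc j) * (norm (gf (z (Suc j))))\<^sup>2) \<le> (4 * (1 - beta) / m) * bb j"
        using apos apos' by simp
    qed
    fix j
    have "norm (gf (z (Suc (Suc j)))) \<ge> norm (gf (z (Suc j))) - norm (gf (z (Suc (Suc j))) - gf (z (Suc j)))"
      using norm_triangle_ineq2[of "gf (z (Suc j))" "gf (z (Suc (Suc j)))"] by (simp add: norm_minus_commute)
    moreover have "norm (gf (z (Suc (Suc j))) - gf (z (Suc j))) \<le> C2 * alpha (Suc j)"
    proof -
      have "norm (gf (z (Suc (Suc j))) - gf (z (Suc j))) \<le> L * norm (z (Suc (Suc j)) - z (Suc j))" by (rule lipf)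
      also have "\<dots> \<le> L * (\<eta> (Suc j) * (2 * Af (z (Suc j)) + 2 * L * \<mu> * S * V (Suc j)))"
        using epoch[of "Suc j"] L_pos by (intro mult_left_mono) auto
      also have "\<dots> \<le> L * (\<eta> (Suc j) * (2 * AB + 2 * L * \<mu> * S * VB))"
      proof -
        have "2 * L * \<mu> * S * V (Suc j) \<le> 2 * L * \<mu> * S * VB"
          using VB(2)[of j] L_pos \<mu>0 S0 V0[of "Suc j"] by (intro mult_left_mono) auto
        hence "2 * Af (z (Suc j)) + 2 * L * \<mu> * S * V (Suc j) \<le> 2 * AB + 2 * L * \<mu> * S * VB"
          using AfB[of "Suc j"] by simp
        thus ?thesis using L_pos \<eta>0[of "Suc j"] by (intro mult_left_mono) auto
      qed
      also have "\<dots> = (C2 - 1) * alpha (Suc j)" by (simp add: C2_def \<eta>c algebra_simps)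
      also have "\<dots> \<le> C2 * alpha (Suc j)" using apos apos' by (simp add: algebra_simps)
      finally show ?thesis .
    qed
    ultimately show "norm (gf (z (Suc (Suc j)))) \<ge> norm (gf (z (Suc j))) - C2 * alpha (Suc j)" by linarith
  qed (use apos apos' C2pos divs in auto)
  have hz: "(\<lambda>k. norm (gf (z k))) \<longlonglongrightarrow> 0" using hz' by (rule LIMSEQ_imp_Suc)
  have xz: "norm (x k - z k) = \<mu> * V k" for k
  proof -
    have "x k - z k = (- (beta * c)) *\<^sub>R (x k - xt k) + (1 - c + beta * c) *\<^sub>R x k"
      by (simp add: zdef c_def algebra_simps)
    moreover have "1 - c + beta * c = 0" using beta by (simp add: c_def field_simps)
    moreover have "beta * c = \<mu>" by (simp add: c_def \<mu>_def)
    ultimately show ?thesis using \<mu>0 by (simp add: V_def)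
  qed
  have gx_le: "norm (gf (x k)) \<le> norm (gf (z k)) + L * (\<mu> * V k)" for k
  proof -
    have "norm (gf (x k)) \<le> norm (gf (z k)) + norm (gf (x k) - gf (z k))"
      by (metis norm_triangle_sub)
    also have "norm (gf (x k) - gf (z k)) \<le> L * norm (x k - z k)" by (rule lipf)
    finally show ?thesis by (simp add: xz)
  qed
  have hx: "(\<lambda>k. norm (gf (x k))) \<longlonglongrightarrow> 0"
  proof -
    have "(\<lambda>k. norm (gf (z k)) + L * (\<mu> * V k)) \<longlonglongrightarrow> 0 + L * (\<mu> * 0)"
      by (intro tendsto_intros hz Vlim)
    hence l: "(\<lambda>k. norm (gf (z k)) + L * (\<mu> * V k)) \<longlonglongrightarrow> 0" by simp
    have e: "eventually (\<lambda>k. norm (norm (gf (x k))) \<le> norm (gf (z k)) + L * (\<mu> * V k)) sequentially"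
      using gx_le by (intro always_eventually) simp
    show ?thesis by (rule Lim_null_comparison[OF e l])
  qed
  have sumx: "summable (\<lambda>k. alpha (Suc k) * (norm (gf (x (Suc k))))\<^sup>2)"
  proof (rule summable_comparison_test'[where g = "\<lambda>j. ((1 - beta) * (8 / m + 2 * L\<^sup>2 * \<mu>\<^sup>2)) * bb j"])
    show "summable (\<lambda>j. ((1 - beta) * (8 / m + 2 * L\<^sup>2 * \<mu>\<^sup>2)) * bb j)" by (intro summable_mult RS(1))
    fix j
    define h where "h = norm (gf (z (Suc j)))"
    define v where "v = V (Suc j)"
    have a0: "alpha (Suc j) > 0" using apos apos' by simp
    have "(norm (gf (x (Suc j))))\<^sup>2 \<le> (h + L * (\<mu> * v))\<^sup>2"
      using gx_le[of "Suc j"] by (intro power_mono) (auto simp: h_def v_def)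
    also have "\<dots> \<le> 2 * h\<^sup>2 + 2 * L\<^sup>2 * \<mu>\<^sup>2 * v\<^sup>2"
    proof -
      have "0 \<le> (h - L * (\<mu> * v))\<^sup>2" by simp
      thus ?thesis by (simp add: power2_eq_square algebra_simps)
    qed
    finally have "alpha (Suc j) * (norm (gf (x (Suc j))))\<^sup>2 \<le> alpha (Suc j) * (2 * h\<^sup>2 + 2 * L\<^sup>2 * \<mu>\<^sup>2 * v\<^sup>2)"
      using a0 by (intro mult_left_mono) auto
    also have "\<dots> \<le> ((1 - beta) * (8 / m + 2 * L\<^sup>2 * \<mu>\<^sup>2)) * bb j"
    proof -
      have aeq: "alpha (Suc j) = (1 - beta) * \<eta> (Suc j)" using beta by (simp add: \<eta>_def)
      have eq1: "alpha (Suc j) * (2 * h\<^sup>2) = (8 * (1 - beta) / m) * ((\<eta> (Suc j) * m / 4) * h\<^sup>2)"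
        unfolding aeq using mpos by (simp add: field_simps)
      have eq2: "alpha (Suc j) * (2 * L\<^sup>2 * \<mu>\<^sup>2 * v\<^sup>2) = (2 * (1 - beta) * L\<^sup>2 * \<mu>\<^sup>2) * (\<eta> (Suc j) * v\<^sup>2)"
        unfolding aeq by (simp add: algebra_simps)
      have b1: "(\<eta> (Suc j) * m / 4) * h\<^sup>2 \<le> bb j" and b2: "\<eta> (Suc j) * v\<^sup>2 \<le> bb j"
        using \<eta>0[of "Suc j"] mpos by (auto simp: bb_def h_def v_def)
      have "(8 * (1 - beta) / m) * ((\<eta> (Suc j) * m / 4) * h\<^sup>2) \<le> (8 * (1 - beta) / m) * bb j"
        using b1 beta mpos by (intro mult_left_mono) auto
      moreover have "(2 * (1 - beta) * L\<^sup>2 * \<mu>\<^sup>2) * (\<eta> (Suc j) * v\<^sup>2) \<le> (2 * (1 - beta) * L\<^sup>2 * \<mu>\<^sup>2) * bb j"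
        using b2 beta by (intro mult_left_mono) auto
      moreover have "((1 - beta) * (8 / m + 2 * L\<^sup>2 * \<mu>\<^sup>2)) * bb j
          = (8 * (1 - beta) / m) * bb j + (2 * (1 - beta) * L\<^sup>2 * \<mu>\<^sup>2) * bb j"
        by (simp add: algebra_simps)
      moreover have "alpha (Suc j) * (2 * h\<^sup>2 + 2 * L\<^sup>2 * \<mu>\<^sup>2 * v\<^sup>2)
          = alpha (Suc j) * (2 * h\<^sup>2) + alpha (Suc j) * (2 * L\<^sup>2 * \<mu>\<^sup>2 * v\<^sup>2)"
        by (simp add: algebra_simps)
      ultimately show ?thesis using eq1 eq2 by linarith
    qed
    finally show "norm (alpha (Suc j) * (norm (gf (x (Suc j))))\<^sup>2) \<le> ((1 - beta) * (8 / m + 2 * L\<^sup>2 * \<mu>\<^sup>2)) * bb j"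
      using a0 by simp
  qed
  have minx: "(\<lambda>T. (\<Sum>k = 1..T. alpha k) * Min ((\<lambda>k. (norm (gf (x k)))\<^sup>2) ` {1..T})) \<longlonglongrightarrow> 0"
    by (rule min_times_sum_zero[OF _ _ alpha_div sumx]) (use alpha_pos in force, simp)
  have accum: "gf p = 0" if r: "strict_mono r" and lim: "(y \<circ> r) \<longlonglongrightarrow> p"
    and hy: "(\<lambda>k. norm (gf (y k))) \<longlonglongrightarrow> 0" for y :: "nat \<Rightarrow> 'a" and r p
  proof -
    have "(\<lambda>j. norm (gf (y (r j)))) \<longlonglongrightarrow> 0"
      using LIMSEQ_subseq_LIMSEQ[OF hy r] by (simp add: o_def)
    moreover have "(\<lambda>j. gf (y (r j))) \<longlonglongrightarrow> gf p"
    proof -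
      have "(\<lambda>j. L * norm (y (r j) - p)) \<longlonglongrightarrow> L * norm (p - p)"
        using lim by (intro tendsto_intros) (simp add: o_def)
      hence l: "(\<lambda>j. L * norm (y (r j) - p)) \<longlonglongrightarrow> 0" by simp
      have e: "eventually (\<lambda>j. norm (gf (y (r j)) - gf p) \<le> L * norm (y (r j) - p)) sequentially"
        using lipf by (intro always_eventually) simp
      have "(\<lambda>j. gf (y (r j)) - gf p) \<longlonglongrightarrow> 0" by (rule Lim_null_comparison[OF e l])
      thus ?thesis by (simp add: LIM_zero_iff)
    qed
    hence "(\<lambda>j. norm (gf (y (r j)))) \<longlonglongrightarrow> norm (gf p)" by (rule tendsto_norm)
    ultimately have "norm (gf p) = 0" using LIMSEQ_unique by blast
    thus ?thesis by simp
  qed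
  obtain Pstar where Pstar: "P \<longlonglongrightarrow> Pstar" using RS(2) by (auto simp: convergent_def)
  have fz: "(\<lambda>k. f (z k)) \<longlonglongrightarrow> Pstar + fbar"
  proof -
    have "(\<lambda>j. W * \<eta> (Suc j) * (V (Suc j))\<^sup>2) \<longlonglongrightarrow> W * (c * 0) * 0\<^sup>2"
      unfolding \<eta>c by (intro tendsto_intros al0 Vlim')
    hence "(\<lambda>j. P j + fbar - W * \<eta> (Suc j) * (V (Suc j))\<^sup>2) \<longlonglongrightarrow> Pstar + fbar - 0"
      by (intro tendsto_intros Pstar) simp
    hence "(\<lambda>j. f (z (Suc j))) \<longlonglongrightarrow> Pstar + fbar" by (simp add: P_def \<Phi>_def)
    thus ?thesis by (rule LIMSEQ_imp_Suc)
  qed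
  have fxz: "(\<lambda>k. f (x k) - f (z k)) \<longlonglongrightarrow> 0"
  proof -
    have bnd: "norm (f (x k) - f (z k)) \<le> (norm (gf (z k)) + norm (gf (x k))) * (\<mu> * V k) + L * (\<mu> * V k)\<^sup>2" for k
    proof -
      have u1: "f (x k) \<le> f (z k) + gf (z k) \<bullet> (x k - z k) + L * (norm (x k - z k))\<^sup>2" by (rule desc)
      have u2: "f (z k) \<le> f (x k) + gf (x k) \<bullet> (z k - x k) + L * (norm (z k - x k))\<^sup>2" by (rule desc)
      have i1: "gf (z k) \<bullet> (x k - z k) \<le> norm (gf (z k)) * (\<mu> * V k)"
        using norm_cauchy_schwarz[of "gf (z k)" "x k - z k"] by (simp add: xz)
      have i2: "gf (x k) \<bullet> (z k - x k) \<le> norm (gf (x k)) * (\<mu> * V k)"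
        using norm_cauchy_schwarz[of "gf (x k)" "z k - x k"] by (simp add: xz norm_minus_commute)
      have n2: "norm (z k - x k) = \<mu> * V k" by (simp add: xz norm_minus_commute)
      have p1: "0 \<le> norm (gf (z k)) * (\<mu> * V k)" "0 \<le> norm (gf (x k)) * (\<mu> * V k)"
        using \<mu>0 V0[of k] by auto
      show ?thesis using u1 u2 i1 i2 p1 unfolding xz n2 by (simp add: abs_le_iff algebra_simps)
    qed
    have "(\<lambda>k. (norm (gf (z k)) + norm (gf (x k))) * (\<mu> * V k) + L * (\<mu> * V k)\<^sup>2)
        \<longlonglongrightarrow> (0 + 0) * (\<mu> * 0) + L * (\<mu> * 0)\<^sup>2"
      by (intro tendsto_intros hz hx Vlim)
    hence l: "(\<lambda>k. (norm (gf (z k)) + norm (gf (x k))) * (\<mu> * V k) + L * (\<mu> * V k)\<^sup>2) \<longlonglongrightarrow> 0" by simp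
    have e: "eventually (\<lambda>k. norm (f (x k) - f (z k)) \<le> (norm (gf (z k)) + norm (gf (x k))) * (\<mu> * V k) + L * (\<mu> * V k)\<^sup>2) sequentially"
      using bnd by (intro always_eventually) simp
    show ?thesis by (rule Lim_null_comparison[OF e l])
  qed
  have fx: "(\<lambda>k. f (x k)) \<longlonglongrightarrow> Pstar + fbar"
    using tendsto_add[OF fz fxz] by simp
  show ?thesis
    using sumx minx hx hz accum[of _ x] accum[of _ z] hx hz fx fz by blast
qed


end
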